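(* Let $G=(V,E)$ be a finite directed acyclic graph with $V=\{v_1,\dots,v_n\}$, $G'=(V,E')$ its minimum equivalent graph, $B$ the associated bipartite graph, and $M$ a maximum matching of $B$ (a matching of largest cardinality). Then $\Phi(M)$ satisfies maximum logical concurrency on $G$, and among all stream assignments $f:V\to S$ satisfying maximum logical concurrency on $G$, $\Phi(M)$ attains the minimum value of $\mathrm{min}_{sync}(G,f)$.
   Context: A path from $u$ to $v$ in a directed graph is a nonempty sequence of edges $(u,w_1),\dots,(w_k,v)$ of that graph. The minimum equivalent graph (MEG) of a finite DAG $G=(V,E)$ is the subgraph $G'=(V,E')$, $E'\subseteq E$, with the same vertex set and the smallest number of edges among subgraphs having the same reachability relation as $G$. The bipartite graph $B=(V_1,V_2,E_B)$ has $V_1=\{x_1,\dots,x_n\}$, $V_2=\{y_1,\dots,y_n\}$ and $E_B=\{(x_i,y_j) : (v_i,v_j)\in E'\}$; a matching is a set of edges of $E_B$ no two sharing an endpoint. Let $S=\{s_1,\dots,s_n\}$ be a set of streams; a stream assignment is a function $f:V\to S$. It satisfies maximum logical concurrency on $G$ if for all distinct $u,v\in V$ with no path between them in either direction in $G$, $f(u)\neq f(v)$. For a matching $m$, $\Phi(m)$ is the stream assignment obtained by starting from the partition $\{\{v_1\},\dots,\{v_n\}\}$, merging, for each $(x_i,y_j)\in m$, the blocks containing $v_i$ and $v_j$, and assigning two vertices the same stream iff they lie in the same block. A synchronization plan $\Lambda\subseteq E$ is safe for $f$ on $G$ if for every edge $(u,v)\in E$, either $f(u)=f(v)$ or there is a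 path $P\subseteq E$ from $u$ to $v$ with $P\cap\Lambda\neq\emptyset$; $\mathrm{min}_{sync}(G,f)=\min\{|\Lambda| : \Lambda\subseteq E \text{ safe for } f \text{ on } G\}$. *)

theory Defs
  imports "HOL-Library.FuncSet"
begin

text \<open>Reachability in a digraph given by an edge set: paths are nonempty sequences of
  edges, so reachability is the transitive closure.\<close>

definition is_MEG :: "'a set \<Rightarrow> ('a \<times> 'a) set \<Rightarrow> ('a \<times> 'a) set \<Rightarrow> bool" where
  "is_MEG V E E' \<longleftrightarrow> E' \<subseteq> E \<and> E'\<^sup>+ = E\<^sup>+ \<and>
     (\<forall>E''. E'' \<subseteq> E \<and> E''\<^sup>+ = E\<^sup>+ \<longrightarrow> card E' \<le> card E'')"

text \<open>Bipartite graph B: left copy x_i = Inl v_i, right copy y_j = Inr v_j.\<close>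
definition bip_edges :: "('a \<times> 'a) set \<Rightarrow> ('a + 'a) set set" where
  "bip_edges E' = {{Inl u, Inr v} | u v. (u, v) \<in> E'}"

definition is_matching :: "('b set) set \<Rightarrow> ('b set) set \<Rightarrow> bool" where
  "is_matching EB m \<longleftrightarrow> m \<subseteq> EB \<and> (\<forall>e1\<in>m. \<forall>e2\<in>m. e1 \<noteq> e2 \<longrightarrow> e1 \<inter> e2 = {})"

definition is_max_matching :: "('b set) set \<Rightarrow> ('b set) set \<Rightarrow> bool" where
  "is_max_matching EB M \<longleftrightarrow> is_matching EB M \<and>
     (\<forall>m. is_matching EB m \<longrightarrow> card m \<le> card M)"

text \<open>The partition produced by Phi(m): merging blocks of v_i and v_j for each (x_i,y_j) in m
  yields the classes of the equivalence closure on V of these pairs.\<close>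
definition phi_rel :: "'a set \<Rightarrow> ('a + 'a) set set \<Rightarrow> ('a \<times> 'a) set" where
  "phi_rel V m = (let R = {(u, v). {Inl u, Inr v} \<in> m} in
      ((R \<union> R\<inverse>)\<^sup>* \<inter> (V \<times> V)))"

definition max_logical_concurrency :: "'a set \<Rightarrow> ('a \<times> 'a) set \<Rightarrow> ('a \<Rightarrow> 's) \<Rightarrow> bool" where
  "max_logical_concurrency V E f \<longleftrightarrow>
     (\<forall>u\<in>V. \<forall>v\<in>V. u \<noteq> v \<and> (u, v) \<notin> E\<^sup>+ \<and> (v, u) \<notin> E\<^sup>+ \<longrightarrow> f u \<noteq> f v)"

definition is_path :: "('a \<times> 'a) set \<Rightarrow> 'a \<Rightarrow> 'a \<Rightarrow> 'a list \<Rightarrow> bool" where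
  "is_path E u v xs \<longleftrightarrow> length xs \<ge> 2 \<and> hd xs = u \<and> last xs = v \<and>
     set (zip xs (tl xs)) \<subseteq> E"

definition path_edges :: "'a list \<Rightarrow> ('a \<times> 'a) set" where
  "path_edges xs = set (zip xs (tl xs))"

definition safe_plan :: "('a \<times> 'a) set \<Rightarrow> ('a \<Rightarrow> 's) \<Rightarrow> ('a \<times> 'a) set \<Rightarrow> bool" where
  "safe_plan E f \<Lambda> \<longleftrightarrow> \<Lambda> \<subseteq> E \<and>
     (\<forall>(u, v)\<in>E. f u = f v \<or> (\<exists>xs. is_path E u v xs \<and> path_edges xs \<inter> \<Lambda> \<noteq> {}))"

definition min_sync :: "('a \<times> 'a) set \<Rightarrow> ('a \<Rightarrow> 's) \<Rightarrow> nat" where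
  "min_sync E f = Min {card \<Lambda> | \<Lambda>. safe_plan E f \<Lambda>}"

end

theory Submission
  imports Defs
begin

lemma path_trancl: "length xs \<ge> 2 \<Longrightarrow> set (zip xs (tl xs)) \<subseteq> R \<Longrightarrow> (hd xs, last xs) \<in> R\<^sup>+"
proof (induction xs)
  case Nil then show ?case by simp
next
  case (Cons a xs)
  then obtain b ys where xs: "xs = b # ys" by (cases xs) auto
  show ?case
  proof (cases "ys = []")
    case True with Cons.prems xs show ?thesis by auto
  next
    case False
    have "(hd xs, last xs) \<in> R\<^sup>+" using Cons.IH Cons.prems xs False by (cases ys) auto
    moreover have "(a,b) \<in> R" using Cons.prems xs by auto
    ultimately show ?thesis using xs by (auto intro: trancl_into_trancl2)
  qed
qed

lemma trancl_path: "(u,v) \<in> R\<^sup>+ \<Longrightarrow> \<exists>xs. is_path R u v xs"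
proof (induction rule: converse_trancl_induct)
  case (base y) then show ?case by (intro exI[of _ "[y,v]"]) (simp add: is_path_def)
next
  case (step y z)
  then obtain xs where p: "is_path R z v xs" by blast
  then obtain ys where xs: "xs = z # ys" "ys \<noteq> []" unfolding is_path_def by (cases xs) force+
  show ?case
    apply (intro exI[of _ "y # xs"])
    using p step(1) xs by (cases ys) (auto simp: is_path_def)
qed

lemma diff_step: "xs \<noteq> [] \<Longrightarrow> h (hd xs) \<noteq> h (last xs) \<Longrightarrow> \<exists>p\<in>set (zip xs (tl xs)). h (fst p) \<noteq> h (snd p)"
proof (induction xs)
  case Nil thus ?case by simp
next
  case (Cons a xs)
  show ?case
  proof (cases "xs = []")
    case True with Cons show ?thesis by simp
  next
    case False
    then obtain b ys where xs: "xs = b # ys" by (cases xs) auto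
    show ?thesis
    proof (cases "h a = h b")
      case True
      with Cons.prems xs have "h (hd xs) \<noteq> h (last xs)" by auto
      with Cons.IH False obtain p where "p \<in> set (zip xs (tl xs))" "h (fst p) \<noteq> h (snd p)" by auto
      then show ?thesis using xs by auto
    next
      case False then show ?thesis using xs by auto
    qed
  qed
qed

lemma meg_tr:
  assumes fin: "finite E" and ac: "acyclic E" and meg: "is_MEG V E E'"
    and uv: "(u,v) \<in> E'" and uw: "(u,w) \<in> E\<^sup>+" and wv: "(w,v) \<in> E\<^sup>+"
  shows False
proof -
  from meg have sub: "E' \<subseteq> E" and cl: "E'\<^sup>+ = E\<^sup>+"
    and mn: "\<forall>E''. E'' \<subseteq> E \<and> E''\<^sup>+ = E\<^sup>+ \<longrightarrow> card E' \<le> card E''"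
    unfolding is_MEG_def by auto
  define E0 where "E0 = E' - {(u,v)}"
  have ins: "E' = insert (u,v) E0" using uv E0_def by auto
  have E0sub: "E0 \<subseteq> E" using sub E0_def by auto
  have E0s: "E0\<^sup>* \<subseteq> E\<^sup>*" using E0sub by (rule rtrancl_mono)
  have cl2: "E'\<^sup>+ = E0\<^sup>+ \<union> {(a,b). (a,u) \<in> E0\<^sup>* \<and> (v,b) \<in> E0\<^sup>*}" using ins trancl_insert by metis
  have "(u,w) \<in> E0\<^sup>+"
  proof -
    have "(u,w) \<in> E'\<^sup>+" using uw cl by simp
    moreover have "(v,w) \<notin> E0\<^sup>*"
    proof
      assume "(v,w) \<in> E0\<^sup>*" then have "(v,w) \<in> E\<^sup>*" using E0s by auto
      with wv have "(v,v) \<in> E\<^sup>+" by auto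
      with ac show False by (simp add: acyclic_def)
    qed
    ultimately show ?thesis using cl2 by auto
  qed
  moreover have "(w,v) \<in> E0\<^sup>+"
  proof -
    have "(w,v) \<in> E'\<^sup>+" using wv cl by simp
    moreover have "(w,u) \<notin> E0\<^sup>*"
    proof
      assume "(w,u) \<in> E0\<^sup>*" then have "(w,u) \<in> E\<^sup>*" using E0s by auto
      with uw have "(u,u) \<in> E\<^sup>+" by auto
      with ac show False by (simp add: acyclic_def)
    qed
    ultimately show ?thesis using cl2 by auto
  qed
  ultimately have uv0: "(u,v) \<in> E0\<^sup>+" by auto
  have "E0\<^sup>+ = E\<^sup>+"
  proof
    show "E0\<^sup>+ \<subseteq> E\<^sup>+" using trancl_mono E0sub by blast
    show "E\<^sup>+ \<subseteq> E0\<^sup>+"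
    proof
      fix p assume "p \<in> E\<^sup>+"
      then have "p \<in> E'\<^sup>+" using cl by simp
      then show "p \<in> E0\<^sup>+" using cl2 uv0
        by (auto intro: rtrancl_trancl_trancl trancl_rtrancl_trancl)
    qed
  qed
  with mn E0sub have "card E' \<le> card E0" by auto
  moreover have "finite E'" using sub fin finite_subset by auto
  then have "card E0 < card E'" unfolding E0_def using uv by (meson card_Diff1_less)
  ultimately show False by simp
qed


lemma path_len2:
  assumes fin: "finite E" and ac: "acyclic E" and meg: "is_MEG V E E'"
    and ab: "(a,b) \<in> E'" and p: "is_path E a b xs"
  shows "xs = [a,b]"
proof -
  from p obtain w ys where xs: "xs = a # w # ys" unfolding is_path_def
    by (cases xs; cases "tl xs") auto
  show ?thesis
  proof (cases "ys = []")
    case True then show ?thesis using xs p by (simp add: is_path_def)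
  next
    case False
    have "(hd (w#ys), last (w#ys)) \<in> E\<^sup>+"
      by (rule path_trancl) (use p xs False in \<open>auto simp: is_path_def neq_Nil_conv\<close>)
    then have "(w,b) \<in> E\<^sup>+" using p xs False by (simp add: is_path_def)
    moreover have "(a,w) \<in> E\<^sup>+" using p xs by (auto simp: is_path_def)
    ultimately show ?thesis using meg_tr[OF fin ac meg ab] by blast
  qed
qed

lemma min_sync_eq:
  assumes fin: "finite E" and ac: "acyclic E" and meg: "is_MEG V E E'"
  shows "min_sync E h = card {e\<in>E'. h (fst e) \<noteq> h (snd e)}"
proof -
  define C where "C = {e\<in>E'. h (fst e) \<noteq> h (snd e)}"
  from meg have sub: "E' \<subseteq> E" and cl: "E'\<^sup>+ = E\<^sup>+" unfolding is_MEG_def by auto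
  have key: "\<exists>xs. is_path E a b xs \<and> path_edges xs \<inter> C \<noteq> {}"
    if ab: "(a,b) \<in> E" and hab: "h a \<noteq> h b" for a b
  proof -
    have "(a,b) \<in> E'\<^sup>+" using ab cl by auto
    then obtain xs where xs: "is_path E' a b xs" by (blast dest: trancl_path)
    then have "xs \<noteq> []" "h (hd xs) \<noteq> h (last xs)" using hab unfolding is_path_def by auto
    then obtain q where q: "q \<in> set (zip xs (tl xs))" "h (fst q) \<noteq> h (snd q)"
      using diff_step[of xs h] by blast
    have "q \<in> E'" using q(1) xs unfolding is_path_def by blast
    then have "q \<in> C" using q(2) C_def by simp
    then have "path_edges xs \<inter> C \<noteq> {}" using q(1) unfolding path_edges_def by blast
    moreover have "is_path E a b xs" using xs sub unfolding is_path_def by blast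
    ultimately show ?thesis by blast
  qed
  have safe: "safe_plan E h C"
    unfolding safe_plan_def
  proof (intro conjI ballI)
    show "C \<subseteq> E" using sub C_def by auto
    fix p assume pE: "p \<in> E"
    obtain a b where p: "p = (a,b)" by (cases p)
    show "case p of (u, v) \<Rightarrow> h u = h v \<or> (\<exists>xs. is_path E u v xs \<and> path_edges xs \<inter> C \<noteq> {})"
      unfolding p using key[of a b] pE p by blast
  qed
  have low: "card C \<le> card L" if "safe_plan E h L" for L
  proof -
    have "C \<subseteq> L"
    proof
      fix q assume q: "q \<in> C"
      obtain a b where qab: "q = (a,b)" by (cases q)
      have "(a,b) \<in> E'" "h a \<noteq> h b" using q qab C_def by auto
      moreover have "(a,b) \<in> E" using sub calculation by auto
      moreover have "h a = h b \<or> (\<exists>xs. is_path E a b xs \<and> path_edges xs \<inter> L \<noteq> {})"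
        using that \<open>(a,b) \<in> E\<close> unfolding safe_plan_def by blast
      ultimately obtain xs where "is_path E a b xs" "path_edges xs \<inter> L \<noteq> {}"
        by blast
      moreover then have "xs = [a,b]" using path_len2[OF fin ac meg \<open>(a,b) \<in> E'\<close>] by blast
      ultimately show "q \<in> L" using qab by (auto simp: path_edges_def)
    qed
    moreover have "finite L" using that fin finite_subset unfolding safe_plan_def by blast
    ultimately show ?thesis by (rule card_mono[rotated])
  qed
  have finA: "finite {card L | L. safe_plan E h L}"
  proof (rule finite_subset[of _ "{..card E}"])
    show "{card L | L. safe_plan E h L} \<subseteq> {..card E}"
    proof
      fix x assume "x \<in> {card L | L. safe_plan E h L}"
      then obtain L where "x = card L" "L \<subseteq> E" unfolding safe_plan_def by blast
      then show "x \<in> {..card E}" using fin card_mono by auto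
    qed
  qed simp
  have "min_sync E h = card C"
    unfolding min_sync_def
  proof (rule Min_eqI[OF finA])
    fix y assume "y \<in> {card L | L. safe_plan E h L}"
    then obtain L where "y = card L" "safe_plan E h L" by blast
    then show "card C \<le> y" using low by simp
  next
    show "card C \<in> {card L | L. safe_plan E h L}" using safe by blast
  qed
  then show ?thesis using C_def by simp
qed


lemma chain_lemma:
  assumes fn: "\<And>y z z'. (y,z) \<in> R \<Longrightarrow> (y,z') \<in> R \<Longrightarrow> z = z'"
    and ij: "\<And>y y' z. (y,z) \<in> R \<Longrightarrow> (y',z) \<in> R \<Longrightarrow> y = y'"
    and xy: "(x,y) \<in> (R \<union> R\<inverse>)\<^sup>*"
  shows "(x,y) \<in> R\<^sup>* \<or> (y,x) \<in> R\<^sup>*"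
  using xy
proof (induction rule: rtrancl_induct)
  case base then show ?case by simp
next
  case (step y z)
  show ?case
  proof (cases "(y,z) \<in> R")
    case yz: True
    show ?thesis
    proof (cases "(x,y) \<in> R\<^sup>*")
      case True then show ?thesis using yz by (meson rtrancl.rtrancl_into_rtrancl)
    next
      case False
      then have "(y,x) \<in> R\<^sup>*" using step.IH by blast
      then show ?thesis
      proof (cases rule: converse_rtranclE)
        case base then show ?thesis using yz by blast
      next
        case (step y')
        then have "y' = z" using fn yz by blast
        then show ?thesis using step by blast
      qed
    qed
  next
    case False
    then have zy: "(z,y) \<in> R" using step.hyps(2) by blast
    show ?thesis
    proof (cases "(y,x) \<in> R\<^sup>*")
      case True then show ?thesis using zy by (meson converse_rtrancl_into_rtrancl)
    next
      case False
      then have "(x,y) \<in> R\<^sup>*" using step.IH by blast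
      then show ?thesis
      proof (cases rule: rtranclE)
        case base then show ?thesis using zy by blast
      next
        case (step y')
        then have "y' = z" using ij zy by blast
        then show ?thesis using step by blast
      qed
    qed
  qed
qed

lemma bip_mem: "{Inl u, Inr v} \<in> bip_edges E' \<Longrightarrow> (u,v) \<in> E'"
  unfolding bip_edges_def by (auto simp: doubleton_eq_iff)

lemma bip_elem: "e \<in> bip_edges E' \<Longrightarrow> \<exists>u v. e = {Inl u, Inr v} \<and> (u,v) \<in> E'"
  unfolding bip_edges_def by auto

theorem theorem4:
  fixes V :: "'a set" and E E' :: "('a \<times> 'a) set" and S :: "'s set"
    and M :: "('a + 'a) set set" and f :: "'a \<Rightarrow> 's"
  assumes "finite V" and "E \<subseteq> V \<times> V" and "acyclic E"
    and "card S = card V"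
    and "is_MEG V E E'"
    and "is_max_matching (bip_edges E') M"
    and "f \<in> V \<rightarrow> S"
    and "\<forall>u\<in>V. \<forall>v\<in>V. f u = f v \<longleftrightarrow> (u, v) \<in> phi_rel V M"
  shows "max_logical_concurrency V E f \<and>
         (\<forall>g. g \<in> V \<rightarrow> S \<and> max_logical_concurrency V E g \<longrightarrow> min_sync E f \<le> min_sync E g)"
proof -
  note ac = assms(3) and meg = assms(5)
  have fin: "finite E" using finite_subset[OF assms(2)] assms(1) by simp
  from meg have sub: "E' \<subseteq> E" and cl: "E'\<^sup>+ = E\<^sup>+" unfolding is_MEG_def by auto
  have finE': "finite E'" using finite_subset[OF sub fin] .
  have EV: "E' \<subseteq> V \<times> V" using sub assms(2) by blast
  have Mm: "is_matching (bip_edges E') M" and Mmax: "\<forall>m. is_matching (bip_edges E') m \<longrightarrow> card m \<le> card M"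
    using assms(6) unfolding is_max_matching_def by auto
  have Msub: "M \<subseteq> bip_edges E'" and Mdisj: "\<forall>e1\<in>M. \<forall>e2\<in>M. e1 \<noteq> e2 \<longrightarrow> e1 \<inter> e2 = {}"
    using Mm unfolding is_matching_def by auto
  define R where "R = {(u, v). {Inl u, Inr v} \<in> M}"
  have RE': "R \<subseteq> E'" unfolding R_def using Msub by (auto intro: bip_mem)
  have Rfun: "z = z'" if "(y,z) \<in> R" "(y,z') \<in> R" for y z z'
  proof -
    have "{Inl y, Inr z} \<in> M" "{Inl y, Inr z'} \<in> M" using that R_def by auto
    note m = this
    show ?thesis
    proof (rule ccontr)
      assume "z \<noteq> z'"
      then have ne: "{Inl y, Inr z} \<noteq> ({Inl y, Inr z'} :: ('a + 'a) set)" by (auto simp: doubleton_eq_iff)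
      have "{Inl y, Inr z} \<inter> ({Inl y, Inr z'} :: ('a + 'a) set) = {}" by (rule Mdisj[rule_format, OF m(1) m(2) ne])
      then show False by simp
    qed
  qed
  have Rinj: "y = y'" if "(y,z) \<in> R" "(y',z) \<in> R" for y y' z
  proof -
    have "{Inl y, Inr z} \<in> M" "{Inl y', Inr z} \<in> M" using that R_def by auto
    note m = this
    show ?thesis
    proof (rule ccontr)
      assume "y \<noteq> y'"
      then have ne: "{Inl y, Inr z} \<noteq> ({Inl y', Inr z} :: ('a + 'a) set)" by (auto simp: doubleton_eq_iff)
      have "{Inl y, Inr z} \<inter> ({Inl y', Inr z} :: ('a + 'a) set) = {}" by (rule Mdisj[rule_format, OF m(1) m(2) ne])
      then show False by simp
    qed
  qed
  have cf: "\<And>y z z'. (y,z) \<in> R \<Longrightarrow> (y,z') \<in> R \<Longrightarrow> z = z'" using Rfun by blast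
  have ci: "\<And>y y' z. (y,z) \<in> R \<Longrightarrow> (y',z) \<in> R \<Longrightarrow> y = y'" using Rinj by blast
  have mlc: "max_logical_concurrency V E f"
    unfolding max_logical_concurrency_def
  proof (intro ballI impI)
    fix u v assume uv: "u \<in> V" "v \<in> V" and nc: "u \<noteq> v \<and> (u, v) \<notin> E\<^sup>+ \<and> (v, u) \<notin> E\<^sup>+"
    show "f u \<noteq> f v"
    proof
      assume "f u = f v"
      then have "(u,v) \<in> phi_rel V M" using assms(8) uv by blast
      then have ch: "(u,v) \<in> (R \<union> R\<inverse>)\<^sup>*" unfolding phi_rel_def R_def Let_def by blast
      have "(u,v) \<in> R\<^sup>* \<or> (v,u) \<in> R\<^sup>*" using chain_lemma[of R u v] cf ci ch by blast
      moreover have "R\<^sup>* \<subseteq> E\<^sup>*" using RE' sub rtrancl_mono by blast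
      ultimately have "(u,v) \<in> E\<^sup>* \<or> (v,u) \<in> E\<^sup>*" by blast
      then show False using nc by (auto simp: rtrancl_eq_or_trancl)
    qed
  qed
  define D where "D h = {e\<in>E'. h (fst e) = h (snd e)}" for h :: "'a \<Rightarrow> 's"
  define F where "F = (\<lambda>(a::'a, b::'a). {Inl a, Inr b} :: ('a + 'a) set)"
  have Finj: "inj F" unfolding F_def inj_def by (auto simp: doubleton_eq_iff)
  have cardC: "card {e\<in>E'. h (fst e) \<noteq> h (snd e)} = card E' - card (D h)" for h
  proof -
    have "{e\<in>E'. h (fst e) \<noteq> h (snd e)} = E' - D h" unfolding D_def by auto
    moreover have "D h \<subseteq> E'" unfolding D_def by auto
    ultimately show ?thesis using finE' by (simp add: card_Diff_subset finite_subset)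
  qed
  have finD: "finite (D h)" for h unfolding D_def using finE' by simp
  have Mf: "card M \<le> card (D f)"
  proof -
    have "M \<subseteq> F ` D f"
    proof
      fix e assume e: "e \<in> M"
      then obtain u v where euv: "e = {Inl u, Inr v}" "(u,v) \<in> E'" using Msub bip_elem[of e E'] by blast
      then have "(u,v) \<in> R" using e R_def by simp
      then have "(u,v) \<in> phi_rel V M" unfolding phi_rel_def R_def Let_def using euv(2) EV by blast
      then have "f u = f v" using assms(8) euv(2) EV by blast
      then show "e \<in> F ` D f" using euv unfolding D_def F_def by force
    qed
    then have "card M \<le> card (F ` D f)" using finD by (simp add: card_mono)
    also have "\<dots> \<le> card (D f)" using card_image_le finD by blast
    finally show ?thesis .
  qed
  have Mg: "card (D g) \<le> card M" if g: "max_logical_concurrency V E g" for g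
  proof -
    have tr: False if "(a,b) \<in> E'" "(a,w) \<in> E\<^sup>+" "(w,b) \<in> E\<^sup>+" for a b w
      using meg_tr[OF fin ac meg that] .
    have gc: "(x,y) \<in> E\<^sup>+ \<or> (y,x) \<in> E\<^sup>+" if "x \<in> V" "y \<in> V" "x \<noteq> y" "g x = g y" for x y
      using g that unfolding max_logical_concurrency_def by blast
    have "is_matching (bip_edges E') (F ` D g)"
      unfolding is_matching_def
    proof (intro conjI ballI impI)
      show "F ` D g \<subseteq> bip_edges E'" unfolding F_def D_def bip_edges_def by auto
      fix e1 e2 assume e1: "e1 \<in> F ` D g" and e2: "e2 \<in> F ` D g" and ne: "e1 \<noteq> e2"
      obtain a b where ab: "e1 = {Inl a, Inr b}" "(a,b) \<in> E'" "g a = g b"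
        using e1 unfolding F_def D_def by auto
      obtain c d where cd: "e2 = {Inl c, Inr d}" "(c,d) \<in> E'" "g c = g d"
        using e2 unfolding F_def D_def by auto
      have V4: "a \<in> V" "b \<in> V" "c \<in> V" "d \<in> V" using ab cd EV by auto
      show "e1 \<inter> e2 = {}"
      proof (rule ccontr)
        assume "e1 \<inter> e2 \<noteq> {}"
        then have "a = c \<or> b = d" using ab cd by auto
        then show False
        proof
          assume ac': "a = c"
          then have "b \<noteq> d" using ne ab cd by auto
          then have "(b,d) \<in> E\<^sup>+ \<or> (d,b) \<in> E\<^sup>+" using gc[OF V4(2) V4(4)] ab cd ac' by simp
          then show False
          proof
            assume "(b,d) \<in> E\<^sup>+"
            moreover have "(a,b) \<in> E\<^sup>+" using ab sub by auto
            ultimately show False using tr cd ac' by blast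
          next
            assume "(d,b) \<in> E\<^sup>+"
            moreover have "(a,d) \<in> E\<^sup>+" using cd sub ac' by auto
            ultimately show False using tr ab by blast
          qed
        next
          assume bd: "b = d"
          then have "a \<noteq> c" using ne ab cd by auto
          then have "(a,c) \<in> E\<^sup>+ \<or> (c,a) \<in> E\<^sup>+" using gc[OF V4(1) V4(3)] ab cd bd by simp
          then show False
          proof
            assume "(a,c) \<in> E\<^sup>+"
            moreover have "(c,b) \<in> E\<^sup>+" using cd sub bd by auto
            ultimately show False using tr ab by blast
          next
            assume "(c,a) \<in> E\<^sup>+"
            moreover have "(a,d) \<in> E\<^sup>+" using ab sub bd by auto
            ultimately show False using tr cd by blast
          qed
        qed
      qed
    qed
    then have "card (F ` D g) \<le> card M" using Mmax by blast
    moreover have "card (F ` D g) = card (D g)" using Finj by (simp add: card_image inj_on_subset)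
    ultimately show ?thesis by simp
  qed
  show ?thesis
  proof (intro conjI allI impI)
    show "max_logical_concurrency V E f" by (rule mlc)
    fix g assume "g \<in> V \<rightarrow> S \<and> max_logical_concurrency V E g"
    then have "card (D g) \<le> card (D f)" using Mg[of g] Mf by simp
    moreover have "card (D g) \<le> card E'" "card (D f) \<le> card E'"
      using finE' unfolding D_def by (auto intro: card_mono)
    ultimately show "min_sync E f \<le> min_sync E g"
      unfolding min_sync_eq[OF fin ac meg] cardC by linarith
  qed
qed

end
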